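(* Let $\Gamma$ be a tetravalent (simple) graph admitting a subgroup $G \leq \mathrm{Aut}(\Gamma)$ acting regularly on the set of arcs of $\Gamma$. Then $\Gamma$ has exactly three $G$-orbits of $G$-consistent cycles, all of which are $G$-symmetric, if and only if the vertex stabilizers in $G$ are isomorphic to the Klein $4$-group $\mathbb{Z}_2\times\mathbb{Z}_2$.
   Context: An arc of a graph is an ordered pair of adjacent vertices. For an arc-transitive group $G$ of automorphisms of $\Gamma$, a directed cycle $\vec C=(v_0,v_1,\ldots,v_{r-1})$ (a connected $2$-valent subgraph with one of its two orientations) is $G$-consistent if some $g\in G$ maps each $v_i$ to $v_{i+1}$ (indices mod $r$); such $g$ is a shunt. An undirected cycle is $G$-consistent if its two orientations are $G$-consistent. A $G$-consistent cycle is $G$-symmetric if some element of $G$ maps $\vec C$ to its reverse $(v_0,v_{r-1},\ldots,v_1)$, and $G$-chiral otherwise. $G$ acts naturally on the set of $G$-consistent cycles. *)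

theory Defs
  imports "HOL-Algebra.Elementary_Groups"
begin

definition simple_graph :: "'a set \<Rightarrow> ('a \<Rightarrow> 'a \<Rightarrow> bool) \<Rightarrow> bool" where
  "simple_graph V E \<longleftrightarrow> finite V \<and>
     (\<forall>u v. E u v \<longrightarrow> u \<in> V \<and> v \<in> V) \<and>
     (\<forall>u v. E u v \<longrightarrow> E v u) \<and> (\<forall>u. \<not> E u u)"

definition tetravalent :: "'a set \<Rightarrow> ('a \<Rightarrow> 'a \<Rightarrow> bool) \<Rightarrow> bool" where
  "tetravalent V E \<longleftrightarrow> (\<forall>v\<in>V. card {u. E v u} = 4)"

definition is_aut :: "'a set \<Rightarrow> ('a \<Rightarrow> 'a \<Rightarrow> bool) \<Rightarrow> ('a \<Rightarrow> 'a) \<Rightarrow> bool" where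
  "is_aut V E g \<longleftrightarrow> bij_betw g V V \<and> (\<forall>x. x \<notin> V \<longrightarrow> g x = x) \<and>
     (\<forall>u\<in>V. \<forall>v\<in>V. E u v \<longleftrightarrow> E (g u) (g v))"

definition perm_inv :: "'a set \<Rightarrow> ('a \<Rightarrow> 'a) \<Rightarrow> ('a \<Rightarrow> 'a)" where
  "perm_inv V g = (\<lambda>x. if x \<in> V then inv_into V g x else x)"

definition aut_subgroup :: "'a set \<Rightarrow> ('a \<Rightarrow> 'a \<Rightarrow> bool) \<Rightarrow> ('a \<Rightarrow> 'a) set \<Rightarrow> bool" where
  "aut_subgroup V E G \<longleftrightarrow> (\<forall>g\<in>G. is_aut V E g) \<and> id \<in> G \<and>
     (\<forall>g\<in>G. \<forall>h\<in>G. g \<circ> h \<in> G) \<and> (\<forall>g\<in>G. perm_inv V g \<in> G)"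

definition arc_regular :: "'a set \<Rightarrow> ('a \<Rightarrow> 'a \<Rightarrow> bool) \<Rightarrow> ('a \<Rightarrow> 'a) set \<Rightarrow> bool" where
  "arc_regular V E G \<longleftrightarrow>
     (\<forall>u v x y. E u v \<longrightarrow> E x y \<longrightarrow> (\<exists>!g. g \<in> G \<and> g u = x \<and> g v = y))"

text \<open>A directed cycle (v_0,...,v_{r-1}) given as a list; it is represented
  (independently of the starting vertex) by its set of arcs.\<close>

definition is_dcycle_list :: "'a set \<Rightarrow> ('a \<Rightarrow> 'a \<Rightarrow> bool) \<Rightarrow> 'a list \<Rightarrow> bool" where
  "is_dcycle_list V E xs \<longleftrightarrow> length xs \<ge> 3 \<and> distinct xs \<and> set xs \<subseteq> V \<and>
     (\<forall>i<length xs. E (xs ! i) (xs ! ((i + 1) mod length xs)))"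

definition cycle_arcs :: "'a list \<Rightarrow> ('a \<times> 'a) set" where
  "cycle_arcs xs = {(xs ! i, xs ! ((i + 1) mod length xs)) | i. i < length xs}"

definition is_shunt :: "('a \<Rightarrow> 'a) \<Rightarrow> 'a list \<Rightarrow> bool" where
  "is_shunt g xs \<longleftrightarrow> (\<forall>i<length xs. g (xs ! i) = xs ! ((i + 1) mod length xs))"

definition consistent_dcycle ::
  "'a set \<Rightarrow> ('a \<Rightarrow> 'a \<Rightarrow> bool) \<Rightarrow> ('a \<Rightarrow> 'a) set \<Rightarrow> ('a \<times> 'a) set \<Rightarrow> bool" where
  "consistent_dcycle V E G D \<longleftrightarrow>
     (\<exists>xs. is_dcycle_list V E xs \<and> D = cycle_arcs xs \<and> (\<exists>g\<in>G. is_shunt g xs))"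

definition undirect :: "('a \<times> 'a) set \<Rightarrow> 'a set set" where
  "undirect D = (\<lambda>(u, v). {u, v}) ` D"

definition consistent_ucycle ::
  "'a set \<Rightarrow> ('a \<Rightarrow> 'a \<Rightarrow> bool) \<Rightarrow> ('a \<Rightarrow> 'a) set \<Rightarrow> 'a set set \<Rightarrow> bool" where
  "consistent_ucycle V E G C \<longleftrightarrow>
     (\<exists>D. C = undirect D \<and> consistent_dcycle V E G D \<and> consistent_dcycle V E G (converse D))"

definition symmetric_ucycle ::
  "'a set \<Rightarrow> ('a \<Rightarrow> 'a \<Rightarrow> bool) \<Rightarrow> ('a \<Rightarrow> 'a) set \<Rightarrow> 'a set set \<Rightarrow> bool" where
  "symmetric_ucycle V E G C \<longleftrightarrow>
     (\<exists>D. C = undirect D \<and> consistent_dcycle V E G D \<and>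
        (\<exists>g\<in>G. map_prod g g ` D = converse D))"

definition ucycle_image :: "('a \<Rightarrow> 'a) \<Rightarrow> 'a set set \<Rightarrow> 'a set set" where
  "ucycle_image g C = (\<lambda>e. g ` e) ` C"

definition ucycle_orbit :: "('a \<Rightarrow> 'a) set \<Rightarrow> 'a set set \<Rightarrow> 'a set set set" where
  "ucycle_orbit G C = {ucycle_image g C | g. g \<in> G}"

definition consistent_orbits ::
  "'a set \<Rightarrow> ('a \<Rightarrow> 'a \<Rightarrow> bool) \<Rightarrow> ('a \<Rightarrow> 'a) set \<Rightarrow> 'a set set set set" where
  "consistent_orbits V E G = {ucycle_orbit G C | C. consistent_ucycle V E G C}"

definition stabilizer_group :: "('a \<Rightarrow> 'a) set \<Rightarrow> 'a \<Rightarrow> ('a \<Rightarrow> 'a) monoid" where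
  "stabilizer_group G v = \<lparr>carrier = {g \<in> G. g v = v}, monoid.mult = (\<circ>), one = id\<rparr>"

end

theory Submission
  imports Defs
begin


definition orb :: "('a \<Rightarrow> 'a) \<Rightarrow> 'a \<Rightarrow> 'a set" where
  "orb g x = range (\<lambda>i. (g ^^ i) x)"

definition dc :: "('a \<Rightarrow> 'a) \<Rightarrow> 'a \<Rightarrow> ('a \<times> 'a) set" where
  "dc g x = {(y, g y) | y. y \<in> orb g x}"

lemma funpow_mult_fix:
  assumes "(g ^^ n) x = x" shows "(g ^^ (n * k)) x = x"
proof (induction k)
  case 0 then show ?case by simp
next
  case (Suc k)
  have "(g ^^ (n * Suc k)) x = (g ^^ n) ((g ^^ (n * k)) x)"
    by (simp add: funpow_add)
  then show ?case using Suc assms by simp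
qed

lemma funpow_mod_fix:
  assumes "(g ^^ n) x = x" shows "(g ^^ i) x = (g ^^ (i mod n)) x"
proof -
  have "i = i mod n + n * (i div n)" by simp
  then have "(g ^^ i) x = (g ^^ (i mod n)) ((g ^^ (n * (i div n))) x)"
    by (metis comp_apply funpow_add)
  then show ?thesis using funpow_mult_fix[OF assms] by simp
qed

lemma orb_period:
  assumes "(g ^^ n) x = x" "n > 0" shows "orb g x = {(g ^^ i) x | i. i < n}"
  unfolding orb_def
proof safe
  fix i show "\<exists>j. (g ^^ i) x = (g ^^ j) x \<and> j < n"
    using funpow_mod_fix[OF assms(1), of i] assms(2) by (intro exI[of _ "i mod n"]) auto
qed auto

lemma orb_self: "x \<in> orb g x"
  unfolding orb_def by (metis funpow_0 rangeI)

lemma orb_step: "y \<in> orb g x \<Longrightarrow> g y \<in> orb g x"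
  unfolding orb_def by (auto simp: image_iff) (metis comp_apply funpow.simps(2))

lemma orb_pow: "(g ^^ i) x \<in> orb g x"
  unfolding orb_def by auto

lemma map_prod_comp_img: "map_prod (f \<circ> g) (f \<circ> g) ` X = map_prod f f ` map_prod g g ` X"
  by (simp add: image_comp map_prod.comp)

lemma map_prod_converse: "map_prod g g ` converse X = converse (map_prod g g ` X)"
  by (auto simp: image_iff)

locale arcreg =
  fixes V :: "'a set" and E :: "'a \<Rightarrow> 'a \<Rightarrow> bool" and G :: "('a \<Rightarrow> 'a) set"
  assumes sg: "simple_graph V E" and tv: "tetravalent V E"
    and ag: "aut_subgroup V E G" and ar: "arc_regular V E G"
begin

lemma finV: "finite V" using sg by (simp add: simple_graph_def)
lemma E_V: "E x y \<Longrightarrow> x \<in> V \<and> y \<in> V" using sg by (simp add: simple_graph_def)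
lemma E_sym: "E x y \<Longrightarrow> E y x" using sg by (simp add: simple_graph_def)
lemma E_irr: "\<not> E x x" using sg by (simp add: simple_graph_def)

lemma G_aut: "g \<in> G \<Longrightarrow> is_aut V E g" using ag by (simp add: aut_subgroup_def)
lemma G_comp: "g \<in> G \<Longrightarrow> h \<in> G \<Longrightarrow> g \<circ> h \<in> G" using ag by (simp add: aut_subgroup_def)
lemma G_id: "id \<in> G" using ag by (simp add: aut_subgroup_def)
lemma G_inv: "g \<in> G \<Longrightarrow> perm_inv V g \<in> G" using ag by (simp add: aut_subgroup_def)

lemma G_V: "g \<in> G \<Longrightarrow> x \<in> V \<Longrightarrow> g x \<in> V"
  using G_aut by (meson bij_betwE is_aut_def)

lemma G_E: "g \<in> G \<Longrightarrow> E x y \<Longrightarrow> E (g x) (g y)"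
  using G_aut E_V unfolding is_aut_def by blast

lemma G_inj: assumes "g \<in> G" shows "inj g"
proof (rule injI)
  fix x y assume eq: "g x = g y"
  have b: "bij_betw g V V" and o: "\<forall>x. x \<notin> V \<longrightarrow> g x = x"
    using G_aut[OF assms] by (auto simp: is_aut_def)
  show "x = y"
  proof (cases "x \<in> V"; cases "y \<in> V")
    assume "x \<in> V" "y \<in> V" then show ?thesis using b eq by (metis bij_betw_iff_bijections)
  next
    assume "x \<in> V" "y \<notin> V" then show ?thesis using b eq o by (metis bij_betwE)
  next
    assume "x \<notin> V" "y \<in> V" then show ?thesis using b eq o by (metis bij_betwE)
  next
    assume "x \<notin> V" "y \<notin> V" then show ?thesis using eq o by metis
  qed
qed

lemma G_inv_right: assumes "g \<in> G" shows "g (perm_inv V g x) = x"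
proof -
  have b: "bij_betw g V V" and o: "\<forall>x. x \<notin> V \<longrightarrow> g x = x"
    using G_aut[OF assms] by (auto simp: is_aut_def)
  show ?thesis
    using b o unfolding perm_inv_def by (auto simp: bij_betw_inv_into_right)
qed

lemma G_inv_left: assumes "g \<in> G" shows "perm_inv V g (g x) = x"
  using G_inv_right[OF assms] G_inj[OF assms] by (metis injD)

lemma G_pow: "g \<in> G \<Longrightarrow> g ^^ n \<in> G"
  by (induction n) (auto simp: G_id G_comp)

lemma uniq: "g \<in> G \<Longrightarrow> g' \<in> G \<Longrightarrow> E x y \<Longrightarrow> g x = g' x \<Longrightarrow> g y = g' y \<Longrightarrow> g = g'"
  using ar G_E unfolding arc_regular_def by metis

lemma ex_arc: "E x y \<Longrightarrow> E p q \<Longrightarrow> \<exists>g\<in>G. g x = p \<and> g y = q"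
  using ar unfolding arc_regular_def by metis

lemma periodic: assumes "g \<in> G" "x \<in> V" shows "\<exists>n>0. (g ^^ n) x = x"
proof -
  have sub: "range (\<lambda>i. (g ^^ i) x) \<subseteq> V"
  proof safe
    fix i show "(g ^^ i) x \<in> V" by (induction i) (auto simp: assms G_V)
  qed
  have "\<not> inj (\<lambda>i. (g ^^ i) x)"
  proof
    assume "inj (\<lambda>i. (g ^^ i) x)"
    then have "finite (UNIV :: nat set)"
      using finite_imageD finite_subset[OF sub finV] by blast
    then show False by simp
  qed
  then obtain i j where ij: "i \<noteq> j" "(g ^^ i) x = (g ^^ j) x" unfolding inj_def by blast
  { fix i j assume ij: "i < j" "(g ^^ i) x = (g ^^ j) x"
    have "(g ^^ i) ((g ^^ (j - i)) x) = (g ^^ i) x"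
      using ij by (metis comp_apply funpow_add le_add_diff_inverse less_imp_le_nat)
    then have "(g ^^ (j - i)) x = x" using inj_fn[OF G_inj[OF assms(1)], of i] by (metis injD)
    then have "\<exists>n>0. (g ^^ n) x = x" using ij by (intro exI[of _ "j - i"]) auto }
  then show ?thesis using ij by (metis linorder_neqE_nat)
qed

lemma orb_V: assumes "g \<in> G" "x \<in> V" shows "orb g x \<subseteq> V"
proof safe
  fix y assume "y \<in> orb g x"
  then obtain i where "y = (g ^^ i) x" by (auto simp: orb_def)
  moreover have "(g ^^ i) x \<in> V" by (induction i) (auto simp: assms G_V)
  ultimately show "y \<in> V" by simp
qed

lemma orb_back: assumes "g \<in> G" "x \<in> V" "g z \<in> orb g x" shows "z \<in> orb g x"
proof -
  obtain n where n: "n > 0" "(g ^^ n) x = x" using periodic[OF assms(1,2)] by blast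
  obtain i where i: "g z = (g ^^ i) x" using assms(3) by (auto simp: orb_def)
  define j where "j = (if i = 0 then n - 1 else i - 1)"
  have "g ((g ^^ j) x) = (g ^^ i) x"
  proof (cases "i = 0")
    case True
    then have "Suc j = n" using n by (simp add: j_def)
    moreover have "g ((g ^^ j) x) = (g ^^ Suc j) x" by simp
    ultimately show ?thesis using n True by simp
  next
    case False
    then have "Suc j = i" by (simp add: j_def)
    moreover have "g ((g ^^ j) x) = (g ^^ Suc j) x" by simp
    ultimately show ?thesis by simp
  qed
  then have "z = (g ^^ j) x" using i G_inj[OF assms(1)] by (metis injD)
  then show ?thesis by (simp add: orb_pow)
qed

lemma orb_eq: assumes "g \<in> G" "x \<in> V" "y \<in> orb g x" shows "orb g y = orb g x"
proof
  obtain i where i: "y = (g ^^ i) x" using assms(3) by (auto simp: orb_def)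
  show "orb g y \<subseteq> orb g x"
  proof
    fix z assume "z \<in> orb g y"
    then obtain j where "z = (g ^^ j) y" by (auto simp: orb_def)
    then have "z = (g ^^ (j + i)) x" by (simp add: i funpow_add)
    then show "z \<in> orb g x" by (simp add: orb_pow)
  qed
  obtain n where n: "n > 0" "(g ^^ n) x = x" using periodic[OF assms(1,2)] by blast
  have "(g ^^ (n * i - i)) y = (g ^^ (n * i)) x"
  proof -
    have "i \<le> n * i" using n by simp
    then have "n * i - i + i = n * i" by simp
    have "(g ^^ (n * i - i)) ((g ^^ i) x) = (g ^^ (n * i - i + i)) x" by (simp add: funpow_add)
    then show ?thesis unfolding i using \<open>n * i - i + i = n * i\<close> by simp
  qed
  then have "x \<in> orb g y" using funpow_mult_fix[OF n(2)] by (metis orb_pow)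
  then obtain k where k: "x = (g ^^ k) y" by (auto simp: orb_def)
  show "orb g x \<subseteq> orb g y"
  proof
    fix z assume "z \<in> orb g x"
    then obtain j where "z = (g ^^ j) x" by (auto simp: orb_def)
    then have "z = (g ^^ (j + k)) y" by (simp add: k funpow_add)
    then show "z \<in> orb g y" by (simp add: orb_pow)
  qed
qed


lemma cons_to_dc:
  assumes "consistent_dcycle V E G D"
  obtains g x where "g \<in> G" "E x (g x)" "g (g x) \<noteq> x" "D = dc g x"
proof -
  obtain xs g where xs: "is_dcycle_list V E xs" "D = cycle_arcs xs" and g: "g \<in> G" "is_shunt g xs"
    using assms unfolding consistent_dcycle_def by blast
  define n where "n = length xs"
  have n3: "n \<ge> 3" and dist: "distinct xs" and edges: "\<forall>i<n. E (xs ! i) (xs ! ((i + 1) mod n))"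
    using xs(1) unfolding is_dcycle_list_def n_def by auto
  have sh: "\<forall>i<n. g (xs ! i) = xs ! ((i + 1) mod n)" using g(2) unfolding is_shunt_def n_def by auto
  define x where "x = xs ! 0"
  have pw: "i < n \<Longrightarrow> xs ! i = (g ^^ i) x" for i
  proof (induction i)
    case 0 then show ?case by (simp add: x_def)
  next
    case (Suc i)
    then have i: "i < n" by simp
    have "g (xs ! i) = xs ! ((i + 1) mod n)" using sh i by blast
    also have "(i + 1) mod n = Suc i" using Suc.prems by simp
    finally show ?case using Suc.IH i by simp
  qed
  have per: "(g ^^ n) x = x"
  proof -
    have "n = Suc (n - 1)" using n3 by simp
    then have "(g ^^ n) x = (g ^^ Suc (n - 1)) x" by simp
    also have "\<dots> = g ((g ^^ (n - 1)) x)" by simp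
    also have "\<dots> = g (xs ! (n - 1))" using pw[of "n - 1"] n3 by simp
    also have "\<dots> = xs ! ((n - 1 + 1) mod n)" using sh n3 by simp
    also have "(n - 1 + 1) mod n = 0" using n3 by simp
    finally show ?thesis by (simp add: x_def)
  qed
  have orbs: "orb g x = set xs"
  proof -
    have "orb g x = {(g ^^ i) x | i. i < n}" using orb_period[OF per] n3 by simp
    also have "\<dots> = {xs ! i | i. i < n}" using pw by (auto; metis)
    also have "\<dots> = set xs" by (auto simp: set_conv_nth n_def)
    finally show ?thesis .
  qed
  have "D = dc g x"
  proof -
    have "D = {(xs ! i, g (xs ! i)) | i. i < n}"
      unfolding xs(2) cycle_arcs_def n_def[symmetric] using sh by auto
    also have "\<dots> = dc g x" unfolding dc_def orbs by (auto simp: set_conv_nth n_def)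
    finally show ?thesis .
  qed
  moreover have "E x (g x)"
  proof -
    have "0 < n" using n3 by simp
    then have "E (xs ! 0) (xs ! ((0 + 1) mod n))" using edges by blast
    moreover have "g (xs ! 0) = xs ! ((0 + 1) mod n)" using sh \<open>0 < n\<close> by blast
    ultimately show ?thesis by (simp add: x_def)
  qed
  moreover have "g (g x) \<noteq> x"
  proof -
    have "xs ! 1 = g x" using pw[of 1] n3 by simp
    moreover have "xs ! 2 = g (g x)" using pw[of 2] n3 by (simp add: numeral_2_eq_2)
    moreover have "xs ! 2 \<noteq> xs ! 0" using dist n3 nth_eq_iff_index_eq[OF dist, of 2 0] by (force simp add: n_def)
    ultimately show ?thesis by (simp add: x_def)
  qed
  ultimately show ?thesis using that g(1) by blast
qed

lemma dc_to_cons: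
  assumes g: "g \<in> G" and e: "E x (g x)" and ne: "g (g x) \<noteq> x"
  shows "consistent_dcycle V E G (dc g x)"
proof -
  have xV: "x \<in> V" using e E_V by blast
  define n where "n = (LEAST n. n > 0 \<and> (g ^^ n) x = x)"
  have nP: "n > 0 \<and> (g ^^ n) x = x"
    using periodic[OF g xV] unfolding n_def by (metis (mono_tags, lifting) LeastI)
  have nmin: "0 < m \<Longrightarrow> m < n \<Longrightarrow> (g ^^ m) x \<noteq> x" for m
    unfolding n_def using not_less_Least by blast
  have "n \<noteq> 1" using nP e E_irr by auto
  moreover have "n \<noteq> 2" using nP ne by (auto simp: numeral_2_eq_2)
  ultimately have n3: "n \<ge> 3" using nP by linarith
  define xs where "xs = map (\<lambda>i. (g ^^ i) x) [0..<n]"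
  have len: "length xs = n" by (simp add: xs_def)
  have nth: "i < n \<Longrightarrow> xs ! i = (g ^^ i) x" for i by (simp add: xs_def)
  have nxt: "i < n \<Longrightarrow> xs ! ((i + 1) mod n) = (g ^^ (i + 1)) x" for i
  proof -
    assume i: "i < n"
    show ?thesis
    proof (cases "i + 1 < n")
      case True then show ?thesis by (simp add: nth)
    next
      case False then have "i + 1 = n" using i by simp
      then show ?thesis using nP nth[of 0] by simp
    qed
  qed
  have dist: "distinct xs"
  proof -
    { fix i j assume ij: "i < j" "j < n" "(g ^^ i) x = (g ^^ j) x"
      have "(g ^^ i) ((g ^^ (j - i)) x) = (g ^^ i) x"
        using ij by (metis comp_apply funpow_add le_add_diff_inverse less_imp_le_nat)
      then have "(g ^^ (j - i)) x = x" using inj_fn[OF G_inj[OF g], of i] by (metis injD)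
      then have False using nmin[of "j - i"] ij by auto }
    then show ?thesis unfolding distinct_conv_nth len
      by (metis nth linorder_neqE_nat)
  qed
  have setV: "set xs \<subseteq> V"
    using orb_V[OF g xV] by (auto simp: xs_def orb_pow)
  have edg: "\<forall>i<length xs. E (xs ! i) (xs ! ((i + 1) mod length xs))"
  proof (intro allI impI)
    fix i assume i: "i < length xs"
    have "E ((g ^^ i) x) ((g ^^ i) (g x))" using G_E[OF G_pow[OF g] e] .
    moreover have "(g ^^ i) (g x) = (g ^^ (i + 1)) x" by (simp add: funpow_swap1)
    ultimately show "E (xs ! i) (xs ! ((i + 1) mod length xs))" using i len nth nxt by simp
  qed
  have shunt: "is_shunt g xs"
    unfolding is_shunt_def len using nth nxt by simp
  have "cycle_arcs xs = dc g x"
  proof -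
    have "cycle_arcs xs = {((g ^^ i) x, g ((g ^^ i) x)) | i. i < n}"
      unfolding cycle_arcs_def len using nth nxt by (auto; metis)
    also have "\<dots> = dc g x" unfolding dc_def orb_period[OF nP[THEN conjunct2] nP[THEN conjunct1]]
      by blast
    finally show ?thesis .
  qed
  then show ?thesis unfolding consistent_dcycle_def is_dcycle_list_def
    using n3 len dist setV edg shunt g by metis
qed


lemma dc_mem: "(p, q) \<in> dc g x \<longleftrightarrow> p \<in> orb g x \<and> q = g p"
  by (auto simp: dc_def)

lemma orb_inv: assumes g: "g \<in> G" and xV: "x \<in> V"
  shows "orb (perm_inv V g) (g x) = orb g x"
proof
  let ?g = "perm_inv V g"
  have g': "?g \<in> G" using G_inv[OF g] .
  have gxV: "g x \<in> V" using G_V[OF g xV] .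
  show "orb ?g (g x) \<subseteq> orb g x"
  proof
    fix z assume "z \<in> orb ?g (g x)"
    then obtain i where z: "z = (?g ^^ i) (g x)" by (auto simp: orb_def)
    have "(?g ^^ i) (g x) \<in> orb g x"
    proof (induction i)
      case 0 then show ?case using orb_step[OF orb_self] by simp
    next
      case (Suc i)
      have "g (?g ((?g ^^ i) (g x))) \<in> orb g x" using Suc G_inv_right[OF g] by simp
      then show ?case using orb_back[OF g xV] by simp
    qed
    then show "z \<in> orb g x" using z by simp
  qed
  show "orb g x \<subseteq> orb ?g (g x)"
  proof
    fix z assume "z \<in> orb g x"
    then obtain i where z: "z = (g ^^ i) x" by (auto simp: orb_def)
    have "(g ^^ i) x \<in> orb ?g (g x)"
    proof (induction i)
      case 0
      have "?g (g x) \<in> orb ?g (g x)" using orb_step[OF orb_self] .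
      then show ?case using G_inv_left[OF g] by simp
    next
      case (Suc i)
      have "?g ((g ^^ Suc i) x) = (g ^^ i) x" using G_inv_left[OF g] by simp
      then have "?g ((g ^^ Suc i) x) \<in> orb ?g (g x)" using Suc by simp
      then show ?case using orb_back[OF g' gxV] by blast
    qed
    then show "z \<in> orb ?g (g x)" using z by simp
  qed
qed

lemma dc_converse: assumes g: "g \<in> G" and xV: "x \<in> V"
  shows "converse (dc g x) = dc (perm_inv V g) (g x)"
proof -
  let ?g = "perm_inv V g"
  have "converse (dc g x) = {(g y, y) | y. y \<in> orb g x}" by (auto simp: dc_def)
  also have "\<dots> = {(z, ?g z) | z. z \<in> orb g x}"
  proof safe
    fix y assume y: "y \<in> orb g x"
    show "\<exists>z. (g y, y) = (z, ?g z) \<and> z \<in> orb g x"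
      using y orb_step G_inv_left[OF g] by (intro exI[of _ "g y"]) auto
  next
    fix z assume z: "z \<in> orb g x"
    have "g (?g z) = z" using G_inv_right[OF g] .
    then have "?g z \<in> orb g x" using orb_back[OF g xV] z by simp
    then show "\<exists>y. (z, ?g z) = (g y, y) \<and> y \<in> orb g x"
      using \<open>g (?g z) = z\<close> by (intro exI[of _ "?g z"]) auto
  qed
  also have "\<dots> = dc ?g (g x)" unfolding dc_def orb_inv[OF g xV] ..
  finally show ?thesis .
qed

lemma conv_cons: assumes "consistent_dcycle V E G D"
  shows "consistent_dcycle V E G (converse D)"
proof -
  obtain g x where g: "g \<in> G" "E x (g x)" "g (g x) \<noteq> x" "D = dc g x"
    using cons_to_dc[OF assms] by blast
  let ?g = "perm_inv V g"
  have xV: "x \<in> V" using g(2) E_V by blast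
  have "converse D = dc ?g (g x)" using dc_converse[OF g(1) xV] g(4) by simp
  moreover have "E (g x) (?g (g x))" using G_inv_left[OF g(1)] g(2) E_sym by simp
  moreover have "?g (?g (g x)) \<noteq> g x"
  proof
    assume "?g (?g (g x)) = g x"
    then have "?g x = g x" using G_inv_left[OF g(1)] by simp
    then have "x = g (g x)" using G_inv_right[OF g(1), of x] by simp
    then show False using g(3) by simp
  qed
  ultimately show ?thesis using dc_to_cons G_inv[OF g(1)] by simp
qed

lemma dc_map: assumes k: "k \<in> G" and g: "g \<in> G" and xV: "x \<in> V"
  shows "map_prod k k ` dc g x = dc (k \<circ> g \<circ> perm_inv V k) (k x)"
proof -
  let ?t = "k \<circ> g \<circ> perm_inv V k"
  have tk: "?t (k y) = k (g y)" for y using G_inv_left[OF k] by simp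
  have pw: "(?t ^^ i) (k x) = k ((g ^^ i) x)" for i
    by (induction i) (simp_all add: G_inv_left[OF k])
  have "orb ?t (k x) = k ` orb g x" unfolding orb_def using pw by (auto simp: image_iff)
  then show ?thesis unfolding dc_def using tk by (auto simp: image_iff)
qed

lemma comp_G: "k \<in> G \<Longrightarrow> g \<in> G \<Longrightarrow> k \<circ> g \<circ> perm_inv V k \<in> G"
  by (simp add: G_comp G_inv)

lemma undirect_converse: "undirect (converse D) = undirect D"
  unfolding undirect_def by (auto simp: image_iff insert_commute)

lemma ucycle_image_undirect: "ucycle_image k (undirect D) = undirect (map_prod k k ` D)"
  unfolding ucycle_image_def undirect_def image_image by (simp add: case_prod_beta)

lemma ucycle_image_comp: "ucycle_image g (ucycle_image h C) = ucycle_image (g \<circ> h) C"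
  unfolding ucycle_image_def by (auto simp: image_comp image_image)

lemma ucycle_image_inv: assumes "k \<in> G" shows "ucycle_image (perm_inv V k \<circ> k) C = C"
proof -
  have "perm_inv V k \<circ> k = id" using G_inv_left[OF assms] by auto
  then show ?thesis unfolding ucycle_image_def by simp
qed

lemma orbit_eq: assumes k: "k \<in> G" and C': "ucycle_image k C = C'"
  shows "ucycle_orbit G C = ucycle_orbit G C'"
proof -
  have C: "ucycle_image (perm_inv V k) C' = C"
    using C' ucycle_image_comp ucycle_image_inv[OF k] by metis
  show ?thesis unfolding ucycle_orbit_def
  proof safe
    fix g assume g: "g \<in> G"
    show "\<exists>ga. ucycle_image g C = ucycle_image ga C' \<and> ga \<in> G"
      using C ucycle_image_comp G_comp[OF g G_inv[OF k]] g by metis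
  next
    fix g assume g: "g \<in> G"
    show "\<exists>ga. ucycle_image g C' = ucycle_image ga C \<and> ga \<in> G"
      using C' ucycle_image_comp G_comp[OF g k] by metis
  qed
qed

lemma match:
  assumes t: "t \<in> G" and yV: "y \<in> V" and s: "s \<in> G" and uv: "(u, v) \<in> dc t y"
    and vw: "{v, w} \<in> undirect (dc t y)" and wu: "w \<noteq> u" and su: "s u = v" and sv: "s v = w"
    and e: "E u v"
  shows "t = s" "dc t y = dc s u"
proof -
  have uO: "u \<in> orb t y" and tu: "t u = v" using uv by (auto simp: dc_mem)
  obtain p q where pq: "(p, q) \<in> dc t y" "{v, w} = {p, q}" using vw unfolding undirect_def by auto
  have tq: "q = t p" using pq(1) by (simp add: dc_mem)
  have "t v = w"
  proof (cases "p = v")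
    case True then have "q = w" using pq(2) wu su sv
      by (metis doubleton_eq_iff)
    then show ?thesis using tq True by simp
  next
    case False then have "p = w" "q = v" using pq(2) by (auto simp: doubleton_eq_iff)
    then have "t w = t u" using tq tu by simp
    then have "w = u" using G_inj[OF t] by (metis injD)
    then show ?thesis using wu by simp
  qed
  then show ts: "t = s" using uniq[OF t s e] tu su sv by simp
  show "dc t y = dc s u" unfolding dc_def using orb_eq[OF t yV uO] ts by simp
qed


lemma inv_arc: assumes e: "E u v" and a: "a \<in> G" "a u = v" "a v = u" shows "a (a z) = z"
proof -
  have "a \<circ> a = id" using uniq[OF G_comp[OF a(1) a(1)] G_id e] a by simp
  then show ?thesis by (metis comp_apply id_apply)
qed

lemma sym_to_rel:
  assumes s: "s \<in> G" and g: "g \<in> G" and a: "a \<in> G" and e: "E u (s u)"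
    and au: "a u = s u" and av: "a (s u) = u"
    and sym: "map_prod g g ` dc s u = converse (dc s u)"
  shows "s (a (s z)) = a z"
proof -
  define v where "v = s u"
  have uV: "u \<in> V" using e E_V by blast
  have "(u, v) \<in> dc s u" by (simp add: dc_mem orb_self v_def)
  then have "(g u, g v) \<in> converse (dc s u)" using sym by force
  then have gv: "g v \<in> orb s u" and gu: "g u = s (g v)" by (auto simp: dc_mem)
  have "(v, s v) \<in> dc s u" by (simp add: dc_mem v_def orb_step orb_self)
  then have "(g v, g (s v)) \<in> converse (dc s u)" using sym by force
  then have gsv: "g v = s (g (s v))" by (auto simp: dc_mem)
  have sgs: "s \<circ> g \<circ> s = g"
    using uniq[OF G_comp[OF G_comp[OF s g] s] g, of u v] e gu gsv by (simp add: v_def)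
  have "g u \<in> orb s u" using gu orb_step[OF gv] by simp
  then have "orb s (g u) = orb s u" using orb_eq[OF s uV] by blast
  then have "v \<in> orb s (g u)" by (simp add: v_def orb_step orb_self)
  then obtain m where m: "(s ^^ m) (g u) = v" by (auto simp: orb_def)
  define b where "b = (s ^^ m) \<circ> g"
  have b: "b \<in> G" unfolding b_def using G_comp[OF G_pow[OF s] g] .
  have sbs: "s (b (s z)) = b z" for z
  proof -
    have "s (b (s z)) = (s ^^ m) (s (g (s z)))" by (simp add: b_def funpow_swap1)
    also have "s (g (s z)) = g z" using sgs by (metis comp_apply)
    finally show ?thesis by (simp add: b_def)
  qed
  have bu: "b u = v" using m by (simp add: b_def)
  have "s (b v) = s u" using sbs[of u] bu by (simp add: v_def)
  then have bv: "b v = u" using G_inj[OF s] by (metis injD)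
  have "b = a" using uniq[OF b a e] bu bv au av by (simp add: v_def)
  then show ?thesis using sbs by simp
qed

lemma rel_to_sym:
  assumes s: "s \<in> G" and a: "a \<in> G" and e: "E u (s u)"
    and au: "a u = s u" and av: "a (s u) = u"
    and rel: "\<And>z. s (a (s z)) = a z"
  shows "map_prod a a ` dc s u = converse (dc s u)"
proof -
  have uV: "u \<in> V" using e E_V by blast
  have aa: "a (a z) = z" for z using inv_arc[OF e a au av] .
  have aO: "y \<in> orb s u \<Longrightarrow> a y \<in> orb s u" for y
  proof -
    assume "y \<in> orb s u"
    then obtain i where y: "y = (s ^^ i) u" by (auto simp: orb_def)
    have "a ((s ^^ i) u) \<in> orb s u"
    proof (induction i)
      case 0 then show ?case using au orb_step[OF orb_self] by simp
    next
      case (Suc i)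
      have "s (a (s ((s ^^ i) u))) \<in> orb s u" using rel Suc by simp
      then have "a (s ((s ^^ i) u)) \<in> orb s u" using orb_back[OF s uV] by blast
      then show ?case by simp
    qed
    then show ?thesis using y by simp
  qed
  have sub1: "map_prod a a ` dc s u \<subseteq> converse (dc s u)"
  proof (rule image_subsetI)
    fix pq assume "pq \<in> dc s u"
    then obtain p q where pq: "pq = (p, q)" and p: "p \<in> orb s u" and q: "q = s p"
      by (cases pq) (auto simp: dc_mem)
    have "a q \<in> orb s u" using aO[OF orb_step[OF p]] q by simp
    moreover have "s (a q) = a p" using rel q by simp
    ultimately show "map_prod a a pq \<in> converse (dc s u)" by (simp add: dc_mem pq)
  qed
  have sub2: "converse (dc s u) \<subseteq> map_prod a a ` dc s u"
  proof
    fix pq assume "pq \<in> converse (dc s u)"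
    then obtain p q where pq: "pq = (p, q)" and q: "q \<in> orb s u" and p: "p = s q"
      by (cases pq) (auto simp: dc_mem)
    define z where "z = a p"
    have zO: "z \<in> orb s u" using aO[OF orb_step[OF q]] p z_def by simp
    have "a z = p" using aa z_def by simp
    moreover have "a (s z) = q"
    proof -
      have "s z = a q" using rel[of q] p z_def by simp
      then show ?thesis using aa by simp
    qed
    ultimately have "map_prod a a (z, s z) = pq" by (simp add: pq)
    moreover have "(z, s z) \<in> dc s u" using zO by (simp add: dc_mem)
    ultimately show "pq \<in> map_prod a a ` dc s u" by (metis image_eqI)
  qed
  show ?thesis using sub1 sub2 by blast
qed

lemma normalize:
  assumes e: "E u v" and D: "consistent_dcycle V E G D"
  shows "\<exists>k\<in>G. \<exists>s\<in>G. E v (s v) \<and> s v \<noteq> u \<and> s u = v \<and> map_prod k k ` D = dc s u"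
proof -
  obtain g x where g: "g \<in> G" "E x (g x)" "g (g x) \<noteq> x" "D = dc g x"
    using cons_to_dc[OF D] by blast
  have xV: "x \<in> V" using g(2) E_V by blast
  obtain k where k: "k \<in> G" "k x = u" "k (g x) = v" using ex_arc[OF g(2) e] by blast
  define t where "t = k \<circ> g \<circ> perm_inv V k"
  have t: "t \<in> G" unfolding t_def using comp_G[OF k(1) g(1)] .
  have tk: "t (k y) = k (g y)" for y using G_inv_left[OF k(1)] by (simp add: t_def)
  have tu: "t u = v" using tk[of x] k by simp
  have tv: "t v = k (g (g x))" using tk[of "g x"] k by simp
  have "E v (t v)" using G_E[OF k(1) G_E[OF g(1) g(2)]] k tv by simp
  moreover have "t v \<noteq> u" using tv k(2) g(3) G_inj[OF k(1)] by (metis injD)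
  moreover have "map_prod k k ` D = dc t u" using dc_map[OF k(1) g(1) xV] g(4) k(2) t_def by simp
  ultimately show ?thesis using k(1) t tu by blast
qed


lemma ucons_dc: assumes "E x (g x)" "g \<in> G" "g (g x) \<noteq> x"
  shows "consistent_ucycle V E G (undirect (dc g x))"
  unfolding consistent_ucycle_def using dc_to_cons[OF assms(2,1,3)] conv_cons by blast

lemma sym_dc:
  assumes e: "E u v" and s: "s \<in> G" and su: "s u = v" and sv: "s v \<noteq> u"
    and sym: "symmetric_ucycle V E G (undirect (dc s u))"
  shows "\<exists>g\<in>G. map_prod g g ` dc s u = converse (dc s u)"
proof -
  define w where "w = s v"
  obtain D g where D: "undirect (dc s u) = undirect D" "consistent_dcycle V E G D"
    and g: "g \<in> G" "map_prod g g ` D = converse D"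
    using sym unfolding symmetric_ucycle_def by metis
  have und: "(p, q) \<in> X \<Longrightarrow> {p, q} \<in> undirect X" for p q X
    unfolding undirect_def by (metis (no_types, lifting) case_prod_conv image_eqI)
  have "(u, v) \<in> dc s u" using su by (simp add: dc_mem orb_self)
  then have uvC: "{u, v} \<in> undirect D" using D(1) und by metis
  have "(v, w) \<in> dc s u" using su orb_step[OF orb_self, of s u] by (simp add: dc_mem w_def)
  then have vwC: "{v, w} \<in> undirect D" using D(1) und by metis
  have wu: "w \<noteq> u" using sv w_def by simp
  { fix D' assume D': "consistent_dcycle V E G D'" "undirect D' = undirect D" "(u, v) \<in> D'"
    obtain t y where t: "t \<in> G" "E y (t y)" "t (t y) \<noteq> y" "D' = dc t y"
      using cons_to_dc[OF D'(1)] by blast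
    have yV: "y \<in> V" using t(2) E_V by blast
    have uv': "(u, v) \<in> dc t y" using D'(3) t(4) by simp
    have vw': "{v, w} \<in> undirect (dc t y)" using D'(2) t(4) vwC by simp
    have "dc t y = dc s u"
      using match(2)[OF t(1) yV s uv' vw' wu su] w_def e by simp
    then have "D' = dc s u" using t(4) by simp }
  note key = this
  obtain p q where pq: "(p, q) \<in> D" "{u, v} = {p, q}" using uvC unfolding undirect_def by auto
  show ?thesis
  proof (cases "p = u")
    case True
    then have "(u, v) \<in> D" using pq by (metis doubleton_eq_iff)
    then have "D = dc s u" using key D(2) by blast
    then show ?thesis using g by blast
  next
    case False
    then have "(v, u) \<in> D" using pq by (metis doubleton_eq_iff)
    then have "converse D = dc s u" using key conv_cons[OF D(2)] undirect_converse by blast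
    moreover have "map_prod g g ` converse D = converse (converse D)"
      using g(2) by (metis converse_converse map_prod_converse)
    ultimately show ?thesis using g(1) by metis
  qed
qed

lemma left_imp:
  assumes allsym: "\<forall>C. consistent_ucycle V E G C \<longrightarrow> symmetric_ucycle V E G C"
    and e: "E u v" and h: "h \<in> G" "h v = v"
  shows "h (h z) = z"
proof -
  obtain a where a: "a \<in> G" "a u = v" "a v = u" using ex_arc[OF e E_sym[OF e]] by blast
  have aa: "a (a z) = z" for z using inv_arc[OF e a] .
  show ?thesis
  proof (cases "h u = u")
    case True
    then have "h = id" using uniq[OF h(1) G_id e] h(2) by simp
    then show ?thesis by simp
  next
    case False
    define s where "s = h \<circ> a"
    have s: "s \<in> G" unfolding s_def using G_comp[OF h(1) a(1)] .
    have su: "s u = v" using a h by (simp add: s_def)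
    have sv: "s v \<noteq> u" using a False by (simp add: s_def)
    have esu: "E u (s u)" using e su by simp
    have "E v (s v)" using G_E[OF h(1) E_sym[OF e]] h a by (simp add: s_def)
    then have "consistent_ucycle V E G (undirect (dc s u))"
      using ucons_dc[OF esu s] su sv by simp
    then have "symmetric_ucycle V E G (undirect (dc s u))" using allsym by blast
    then obtain g where g: "g \<in> G" "map_prod g g ` dc s u = converse (dc s u)"
      using sym_dc[OF e s su sv] by blast
    have rel: "s (a (s y)) = a y" for y
      using sym_to_rel[OF s g(1) a(1) esu] a su g(2) by simp
    have "h (h (a y)) = a y" for y using rel[of y] aa by (simp add: s_def)
    then show ?thesis using aa by metis
  qed
qed


lemma map_inv_map: assumes k: "k \<in> G" shows "map_prod (perm_inv V k) (perm_inv V k) ` map_prod k k ` X = X"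
proof -
  have "map_prod (perm_inv V k) (perm_inv V k) \<circ> map_prod k k = id"
    using G_inv_left[OF k] by (auto simp: map_prod.comp)
  then show ?thesis by (simp add: image_comp)
qed

lemma und_mem: "(p, q) \<in> X \<Longrightarrow> {p, q} \<in> undirect X"
  unfolding undirect_def by (metis (no_types, lifting) case_prod_conv image_eqI)

context
  fixes u v a
  assumes e: "E u v" and a: "a \<in> G" "a u = v" "a v = u"
    and P: "\<forall>h\<in>G. h v = v \<longrightarrow> (\<forall>z. h (h z) = z)"
begin

lemma aa: "a (a z) = z" using inv_arc[OF e a] .

lemma relP: assumes s: "s \<in> G" "s u = v" shows "s (a (s z)) = a z"
proof -
  have "s \<circ> a \<in> G" using G_comp[OF s(1) a(1)] .
  moreover have "(s \<circ> a) v = v" using s a by simp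
  ultimately have "(s \<circ> a) ((s \<circ> a) (a z)) = a z" using P by blast
  then show ?thesis using aa by simp
qed

lemma symP: assumes s: "s \<in> G" "s u = v"
  shows "map_prod a a ` dc s u = converse (dc s u)"
  using rel_to_sym[OF s(1) a(1)] e s a relP[OF s] by simp

lemma all_sym: assumes C: "consistent_ucycle V E G C" shows "symmetric_ucycle V E G C"
proof -
  obtain D where D: "C = undirect D" "consistent_dcycle V E G D"
    using C unfolding consistent_ucycle_def by blast
  obtain k s where k: "k \<in> G" and s: "s \<in> G" "s u = v" and kD: "map_prod k k ` D = dc s u"
    using normalize[OF e D(2)] by blast
  define g where "g = perm_inv V k \<circ> a \<circ> k"
  have g: "g \<in> G" unfolding g_def using G_comp[OF G_comp[OF G_inv[OF k] a(1)] k] .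
  have "map_prod g g ` D = map_prod (perm_inv V k) (perm_inv V k) ` map_prod a a ` map_prod k k ` D"
    unfolding g_def by (simp add: map_prod_comp_img)
  also have "\<dots> = map_prod (perm_inv V k) (perm_inv V k) ` converse (map_prod k k ` D)"
    using symP[OF s] kD by simp
  also have "\<dots> = converse D" using map_inv_map[OF k] map_prod_converse by metis
  finally show ?thesis unfolding symmetric_ucycle_def using D g by blast
qed

definition W where "W = {w. E v w} - {u}"
definition S where "S w = (SOME s. s \<in> G \<and> s u = v \<and> s v = w)"
definition Cw where "Cw w = undirect (dc (S w) u)"

lemma S: assumes "w \<in> W" shows "S w \<in> G" "S w u = v" "S w v = w"
proof -
  have "E v w" using assms by (simp add: W_def)
  then have "\<exists>s. s \<in> G \<and> s u = v \<and> s v = w" using ex_arc[OF e] by blast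
  then have "S w \<in> G \<and> S w u = v \<and> S w v = w" unfolding S_def by (rule someI_ex)
  then show "S w \<in> G" "S w u = v" "S w v = w" by auto
qed

lemma Cw_cons: assumes "w \<in> W" shows "consistent_ucycle V E G (Cw w)"
proof -
  have "E u (S w u)" using S[OF assms] e by simp
  moreover have "S w (S w u) \<noteq> u" using S[OF assms] assms by (simp add: W_def)
  ultimately show ?thesis unfolding Cw_def using ucons_dc S[OF assms] by blast
qed

lemma orbits_eq: "consistent_orbits V E G = (\<lambda>w. ucycle_orbit G (Cw w)) ` W"
proof
  show "consistent_orbits V E G \<subseteq> (\<lambda>w. ucycle_orbit G (Cw w)) ` W"
  proof
    fix Ob assume "Ob \<in> consistent_orbits V E G"
    then obtain C where O: "Ob = ucycle_orbit G C" and C: "consistent_ucycle V E G C"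
      unfolding consistent_orbits_def by blast
    obtain D where D: "C = undirect D" "consistent_dcycle V E G D"
      using C unfolding consistent_ucycle_def by blast
    obtain k s where k: "k \<in> G" and s: "s \<in> G" "E v (s v)" "s v \<noteq> u" "s u = v"
        and kD: "map_prod k k ` D = dc s u"
      using normalize[OF e D(2)] by blast
    define w where "w = s v"
    have w: "w \<in> W" using s by (simp add: W_def w_def)
    have "s u = S w u" using S(2)[OF w] s(4) by simp
    moreover have "s v = S w v" using S(3)[OF w] w_def by simp
    ultimately have "s = S w" using uniq[OF s(1) S(1)[OF w] e] by blast
    then have "ucycle_image k C = Cw w" unfolding Cw_def D(1) ucycle_image_undirect kD by simp
    then have "Ob = ucycle_orbit G (Cw w)" using orbit_eq[OF k] O by metis
    then show "Ob \<in> (\<lambda>w. ucycle_orbit G (Cw w)) ` W" using w by blast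
  qed
  show "(\<lambda>w. ucycle_orbit G (Cw w)) ` W \<subseteq> consistent_orbits V E G"
    unfolding consistent_orbits_def using Cw_cons by blast
qed

lemma inj_core:
  assumes k: "k \<in> G" and w: "w \<in> W" and w': "w' \<in> W"
    and C: "Cw w' = undirect (map_prod k k ` dc (S w) u)"
    and uv: "(u, v) \<in> map_prod k k ` dc (S w) u"
  shows "w = w'"
proof -
  let ?s = "S w"
  have uV: "u \<in> V" using e E_V by blast
  define t where "t = k \<circ> ?s \<circ> perm_inv V k"
  have t: "t \<in> G" unfolding t_def using comp_G[OF k S(1)[OF w]] .
  have D': "map_prod k k ` dc ?s u = dc t (k u)" using dc_map[OF k S(1)[OF w] uV] t_def by simp
  have kuV: "k u \<in> V" using G_V[OF k uV] .
  have "(v, w') \<in> dc (S w') u" using S[OF w'] orb_step[OF orb_self, of "S w'" u] by (simp add: dc_mem)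
  then have "{v, w'} \<in> Cw w'" using und_mem by (simp add: Cw_def)
  then have vw': "{v, w'} \<in> undirect (dc t (k u))" using C D' by simp
  have wu: "w' \<noteq> u" using w' by (simp add: W_def)
  have tS: "t = S w'" using match(1)[OF t kuV S(1)[OF w'] _ vw' wu S(2,3)[OF w'] e] uv D' by simp
  obtain z where z: "z \<in> orb ?s u" "k z = u" "k (?s z) = v" using uv by (auto simp: dc_mem)
  obtain i where i: "z = (?s ^^ i) u" using z(1) by (auto simp: orb_def)
  have ks: "k \<circ> ?s ^^ i = id"
  proof (rule uniq[OF G_comp[OF k G_pow[OF S(1)[OF w]]] G_id e])
    show "(k \<circ> ?s ^^ i) u = id u" using z i by simp
    have "(?s ^^ i) v = ?s z" using i S(2)[OF w] by (simp add: funpow_swap1)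
    then show "(k \<circ> ?s ^^ i) v = id v" using z by simp
  qed
  have "w' = t v" using tS S(3)[OF w'] by simp
  also have "t v = k (?s (?s z))"
  proof -
    have "perm_inv V k v = ?s z" using G_inv_left[OF k, of "?s z"] z(3) by simp
    then show ?thesis by (simp add: t_def)
  qed
  also have "?s (?s z) = (?s ^^ i) w"
    using i S(2,3)[OF w] by (simp add: funpow_swap1)
  also have "k ((?s ^^ i) w) = w" using ks by (metis comp_apply id_apply)
  finally show ?thesis by simp
qed

lemma inj_W: "inj_on (\<lambda>w. ucycle_orbit G (Cw w)) W"
proof (rule inj_onI)
  fix w w' assume w: "w \<in> W" and w': "w' \<in> W"
    and eq: "ucycle_orbit G (Cw w) = ucycle_orbit G (Cw w')"
  have "Cw w' \<in> ucycle_orbit G (Cw w')"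
  proof -
    have "ucycle_image id (Cw w') = Cw w'" by (simp add: ucycle_image_def)
    then show ?thesis unfolding ucycle_orbit_def using G_id by blast
  qed
  then have "Cw w' \<in> ucycle_orbit G (Cw w)" using eq by simp
  then obtain k where k: "k \<in> G" and C: "Cw w' = ucycle_image k (Cw w)"
    unfolding ucycle_orbit_def mem_Collect_eq by blast
  let ?D = "dc (S w) u"
  have C1: "Cw w' = undirect (map_prod k k ` ?D)" using C by (simp add: Cw_def ucycle_image_undirect)
  have "(u, v) \<in> dc (S w') u" using S[OF w'] by (simp add: dc_mem orb_self)
  then have "{u, v} \<in> undirect (map_prod k k ` ?D)" using C1 und_mem Cw_def by metis
  then obtain p q where pq: "(p, q) \<in> map_prod k k ` ?D" "{u, v} = {p, q}"
    unfolding undirect_def by auto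
  show "w = w'"
  proof (cases "p = u")
    case True
    then have "(u, v) \<in> map_prod k k ` ?D" using pq by (metis doubleton_eq_iff)
    then show ?thesis using inj_core[OF k w w' C1] by blast
  next
    case False
    then have vu: "(v, u) \<in> map_prod k k ` ?D" using pq by (metis doubleton_eq_iff)
    have ka: "k \<circ> a \<in> G" using G_comp[OF k a(1)] .
    have eqD: "map_prod (k \<circ> a) (k \<circ> a) ` ?D = converse (map_prod k k ` ?D)"
    proof -
      have "map_prod (k \<circ> a) (k \<circ> a) ` ?D = map_prod k k ` map_prod a a ` ?D"
        by (simp add: map_prod_comp_img)
      also have "\<dots> = map_prod k k ` converse ?D" using symP S[OF w] by simp
      finally show ?thesis using map_prod_converse by metis
    qed
    have "(u, v) \<in> map_prod (k \<circ> a) (k \<circ> a) ` ?D" using eqD vu by simp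
    moreover have "Cw w' = undirect (map_prod (k \<circ> a) (k \<circ> a) ` ?D)"
      using C1 eqD undirect_converse by metis
    ultimately show ?thesis using inj_core[OF ka w w'] by blast
  qed
qed

lemma card3: "card (consistent_orbits V E G) = 3"
proof -
  have fin: "finite {w. E v w}" using finite_subset[OF _ finV] E_V by blast
  have "card {w. E v w} = 4" using tv E_V e unfolding tetravalent_def by blast
  moreover have "u \<in> {w. E v w}" using E_sym[OF e] by simp
  ultimately have "card W = 3" unfolding W_def using fin by (simp add: card_Diff_singleton)
  then show ?thesis unfolding orbits_eq using card_image[OF inj_W] by simp
qed

end


lemma has_nb: assumes "v \<in> V" shows "\<exists>u. E v u"
proof -
  have "card {u. E v u} = 4" using tv assms unfolding tetravalent_def by blast
  then have "{u. E v u} \<noteq> {}" by (metis card.empty zero_neq_numeral)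
  then show ?thesis by blast
qed

abbreviation "Z2 \<equiv> integer_mod_group 2 \<times>\<times> integer_mod_group 2"

lemma carrZ: "carrier Z2 = {0, 1} \<times> {0, 1}"
  by (auto simp: carrier_integer_mod_group)

lemma stab_carrier: "carrier (stabilizer_group G v) = {g \<in> G. g v = v}"
  by (simp add: stabilizer_group_def)

lemma stab_mult: "x \<otimes>\<^bsub>stabilizer_group G v\<^esub> y = x \<circ> y"
  by (simp add: stabilizer_group_def)

lemma iso_to_P: assumes iso: "stabilizer_group G v \<cong> Z2" and h: "h \<in> G" "h v = v"
  shows "h (h z) = z"
proof -
  obtain \<phi> where \<phi>: "\<phi> \<in> iso (stabilizer_group G v) Z2" using iso unfolding is_iso_def by blast
  have hom: "\<phi> \<in> hom (stabilizer_group G v) Z2" and inj: "inj_on \<phi> {g \<in> G. g v = v}"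
    using \<phi> by (auto simp: iso_def bij_betw_def stab_carrier)
  have sq: "p \<in> carrier Z2 \<Longrightarrow> p \<otimes>\<^bsub>Z2\<^esub> p = (0, 0)" for p
    by (auto simp: carrZ)
  have hc: "h \<in> carrier (stabilizer_group G v)" using h by (simp add: stab_carrier)
  have ic: "id \<in> carrier (stabilizer_group G v)" using G_id by (simp add: stab_carrier)
  have "\<phi> (h \<circ> h) = \<phi> h \<otimes>\<^bsub>Z2\<^esub> \<phi> h" using hom_mult[OF hom hc hc] by (simp add: stab_mult)
  also have "\<dots> = (0, 0)" using sq hom_in_carrier[OF hom hc] by blast
  also have "\<dots> = \<phi> id \<otimes>\<^bsub>Z2\<^esub> \<phi> id" using sq hom_in_carrier[OF hom ic] by metis
  also have "\<dots> = \<phi> (id \<circ> id)" using hom_mult[OF hom ic ic] by (simp add: stab_mult)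
  finally have "\<phi> (h \<circ> h) = \<phi> id" by simp
  moreover have "h \<circ> h \<in> {g \<in> G. g v = v}" using G_comp[OF h(1) h(1)] h by simp
  moreover have "id \<in> {g \<in> G. g v = v}" using G_id by simp
  ultimately have "h \<circ> h = id" using inj_onD[OF inj] by blast
  then show ?thesis by (metis comp_apply id_apply)
qed

lemma stab_card: assumes vV: "v \<in> V" shows "card {g \<in> G. g v = v} = 4"
proof -
  obtain u where e: "E v u" using has_nb[OF vV] by blast
  have "bij_betw (\<lambda>h. h u) {g \<in> G. g v = v} {w. E v w}"
  proof (rule bij_betwI')
    fix x y assume "x \<in> {g \<in> G. g v = v}" "y \<in> {g \<in> G. g v = v}"
    then show "(x u = y u) = (x = y)" using uniq[of x y v u] e by auto
  next
    fix x assume "x \<in> {g \<in> G. g v = v}"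
    then show "x u \<in> {w. E v w}" using G_E[of x v u] e by auto
  next
    fix w assume "w \<in> {w. E v w}"
    then obtain g where "g \<in> G" "g v = v" "g u = w" using ex_arc[OF e, of v w] by auto
    then show "\<exists>x\<in>{g \<in> G. g v = v}. w = x u" by auto
  qed
  then have "card {g \<in> G. g v = v} = card {w. E v w}" by (rule bij_betw_same_card)
  then show ?thesis using tv vV unfolding tetravalent_def by simp
qed

lemma P_to_iso: assumes vV: "v \<in> V" and P: "\<forall>h\<in>G. h v = v \<longrightarrow> (\<forall>z. h (h z) = z)"
  shows "stabilizer_group G v \<cong> Z2"
proof -
  let ?H = "{g \<in> G. g v = v}"
  have c4: "card ?H = 4" using stab_card[OF vV] .
  have fin: "finite ?H"
  proof (rule ccontr)
    assume "infinite ?H" then have "card ?H = 0" by (rule card.infinite)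
    then show False using c4 by simp
  qed
  have idH: "id \<in> ?H" using G_id by simp
  have "card (?H - {id}) = 3" using c4 idH fin by (simp add: card_Diff_singleton)
  then have "?H - {id} \<noteq> {}" by (metis card.empty zero_neq_numeral)
  then obtain h1 where h1: "h1 \<in> ?H" "h1 \<noteq> id" by blast
  have "card (?H - {id, h1}) = 2" using c4 idH h1 fin by (simp add: card_Diff_subset)
  then have "?H - {id, h1} \<noteq> {}" by (metis card.empty zero_neq_numeral)
  then obtain h2 where h2: "h2 \<in> ?H" "h2 \<noteq> id" "h2 \<noteq> h1" by blast
  have inv1: "h1 (h1 z) = z" for z using P h1 by blast
  have inv2: "h2 (h2 z) = z" for z using P h2 by blast
  have "h1 \<circ> h2 \<in> ?H" using G_comp h1 h2 by auto
  then have inv12: "h1 (h2 (h1 (h2 z))) = z" for z using P by auto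
  have comm: "h2 (h1 y) = h1 (h2 y)" for y
    using inv12[of "h2 (h1 y)"] inv1 inv2 by simp
  define \<psi> where "\<psi> = (\<lambda>(a::int, b::int). (if a = 1 then h1 else id) \<circ> (if b = 1 then h2 else id))"
  have n12: "h1 \<circ> h2 \<noteq> id"
  proof
    assume "h1 \<circ> h2 = id"
    then have "h1 (h1 (h2 z)) = h1 z" for z by (metis comp_apply id_apply)
    then have "h2 = h1" using inv1 by auto
    then show False using h2 by simp
  qed
  have n1: "h1 \<circ> h2 \<noteq> h1"
  proof
    assume "h1 \<circ> h2 = h1"
    then have "h1 (h1 (h2 z)) = h1 (h1 z)" for z by (metis comp_apply)
    then have "h2 = id" using inv1 by auto
    then show False using h2 by simp
  qed
  have n2: "h1 \<circ> h2 \<noteq> h2"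
  proof
    assume "h1 \<circ> h2 = h2"
    then have "h1 (h2 (h2 z)) = h2 (h2 z)" for z by (metis comp_apply)
    then have "h1 = id" using inv2 by auto
    then show False using h1 by simp
  qed
  have img: "\<psi> ` carrier Z2 = {id, h2, h1, h1 \<circ> h2}"
    unfolding carrZ \<psi>_def by auto
  have "\<psi> \<in> iso Z2 (stabilizer_group G v)"
  proof (rule isoI)
    show "\<psi> \<in> hom Z2 (stabilizer_group G v)"
    proof (rule homI)
      fix x assume "x \<in> carrier Z2"
      then have "\<psi> x \<in> {id, h2, h1, h1 \<circ> h2}" using img by blast
      then show "\<psi> x \<in> carrier (stabilizer_group G v)"
        using idH h1 h2 \<open>h1 \<circ> h2 \<in> ?H\<close> by (auto simp: stab_carrier)
    next
      fix x y assume "x \<in> carrier Z2" "y \<in> carrier Z2"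
      then show "\<psi> (x \<otimes>\<^bsub>Z2\<^esub> y) = \<psi> x \<otimes>\<^bsub>stabilizer_group G v\<^esub> \<psi> y"
        unfolding carrZ stab_mult \<psi>_def
        by (auto simp: fun_eq_iff inv1 inv2 comm)
    qed
    show "bij_betw \<psi> (carrier Z2) (carrier (stabilizer_group G v))"
    proof -
      have "inj_on \<psi> (carrier Z2)"
        unfolding carrZ \<psi>_def inj_on_def using h1 h2 n1 n2 n12
        by (auto simp: fun_eq_iff) (metis comp_apply id_apply)+
      moreover have "\<psi> ` carrier Z2 = ?H"
      proof (rule card_subset_eq[OF fin])
        show "\<psi> ` carrier Z2 \<subseteq> ?H" using img idH h1 h2 \<open>h1 \<circ> h2 \<in> ?H\<close> by auto
        have "card (carrier Z2) = 4" unfolding carrZ by simp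
        then show "card (\<psi> ` carrier Z2) = card ?H" using c4 card_image[OF \<open>inj_on \<psi> (carrier Z2)\<close>] by simp
      qed
      ultimately show ?thesis by (simp add: bij_betw_def stab_carrier)
    qed
  qed
  then have "Z2 \<cong> stabilizer_group G v" by (rule is_isoI)
  then show ?thesis
    using group.iso_sym[OF DirProd_group[OF group_integer_mod_group group_integer_mod_group]] by blast
qed

end

theorem lemma1p3:
  fixes V :: "'a set" and E :: "'a \<Rightarrow> 'a \<Rightarrow> bool" and G :: "('a \<Rightarrow> 'a) set"
  assumes "simple_graph V E" and "V \<noteq> {}" and "tetravalent V E"
    and "aut_subgroup V E G" and "arc_regular V E G"
  shows "(card (consistent_orbits V E G) = 3 \<and>
          (\<forall>C. consistent_ucycle V E G C \<longrightarrow> symmetric_ucycle V E G C))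
     \<longleftrightarrow> (\<forall>v\<in>V. stabilizer_group G v \<cong> integer_mod_group 2 \<times>\<times> integer_mod_group 2)"
proof -
  interpret arcreg V E G
    using assms(1,3,4,5) by (rule arcreg.intro)
  show ?thesis
  proof
    assume L: "card (consistent_orbits V E G) = 3 \<and>
          (\<forall>C. consistent_ucycle V E G C \<longrightarrow> symmetric_ucycle V E G C)"
    show "\<forall>v\<in>V. stabilizer_group G v \<cong> integer_mod_group 2 \<times>\<times> integer_mod_group 2"
    proof
      fix v assume vV: "v \<in> V"
      obtain u where "E v u" using has_nb[OF vV] by blast
      then have e: "E u v" by (rule E_sym)
      have "\<forall>h\<in>G. h v = v \<longrightarrow> (\<forall>z. h (h z) = z)"
        using left_imp[OF L[THEN conjunct2] e] by blast
      then show "stabilizer_group G v \<cong> integer_mod_group 2 \<times>\<times> integer_mod_group 2"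
        using P_to_iso[OF vV] by blast
    qed
  next
    assume R: "\<forall>v\<in>V. stabilizer_group G v \<cong> integer_mod_group 2 \<times>\<times> integer_mod_group 2"
    obtain v where vV: "v \<in> V" using assms(2) by blast
    obtain u where "E v u" using has_nb[OF vV] by blast
    then have e: "E u v" by (rule E_sym)
    obtain a where a: "a \<in> G" "a u = v" "a v = u" using ex_arc[OF e E_sym[OF e]] by blast
    have P: "\<forall>h\<in>G. h v = v \<longrightarrow> (\<forall>z. h (h z) = z)"
      using iso_to_P R vV by blast
    show "card (consistent_orbits V E G) = 3 \<and>
          (\<forall>C. consistent_ucycle V E G C \<longrightarrow> symmetric_ucycle V E G C)"
      using card3[OF e a P] all_sym[OF e a P] by blast
  qed
qed

end
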